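(* Fix integers $\ell < \mu < u$ and let $\mu' = \mu + 1$. Let $p \in (0,1)$ be any dyadic rational. Let $Z \sim \operatorname{DSG}_{\mu,p}$ and $Z' \sim \operatorname{DSG}_{\mu',p}$ be samples from the (unclamped) Dyadic Symmetric Geometric distribution centered at $\mu$ and $\mu'$, respectively. Let $Y = \max\{\ell, \min\{Z, u\}\}$ and $Y' = \max\{\ell, \min\{Z', u\}\}$. Then for every $y \in \mathbb{Z} \cap [\ell,u]$, \[ \frac{\Pr[Y = y]}{\Pr[Y' = y]} \le \frac{1}{1 - p} \quad\text{and}\quad \frac{\Pr[Y' = y]}{\Pr[Y = y]} \le \frac{1}{1 - p}, \] so the mechanism (outputting $Y$ when the center is $\mu$) is $\varepsilon$-differentially private with $\varepsilon = \ln\!\left(\tfrac{1}{1-p}\right)$.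
   Context: The Dyadic Symmetric Geometric distribution $\operatorname{DSG}_{c,p}$ with center $c\in\mathbb{Z}$ and dyadic parameter $p\in(0,1)$ is defined as follows: flip one unbiased coin to obtain a sign $S\in\{-1,+1\}$ and draw $G$ from a geometric distribution with parameter $p$ taking values in $\{0,1,2,\dots\}$; set $Z = c - G$ if $S=-1$ and $Z = c + 1 + G$ if $S=+1$. The censored version clamps $Z$ to $[\ell,u]$ via $\max\{\ell,\min\{Z,u\}\}$. Adjacent inputs are modeled by centers differing by one ($\mu$ vs. $\mu+1$). *)

theory Defs
  imports "HOL-Probability.Probability"
begin

definition dyadic :: "real \<Rightarrow> bool" where
  "dyadic x \<longleftrightarrow> (\<exists>(a::int) (k::nat). x = real_of_int a / 2 ^ k)"

text \<open>Dyadic Symmetric Geometric distribution DSG_{c,p}: a fair sign S and an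
independent geometric G on {0,1,...} with P(G = n) = (1-p)^n p;
Z = c - G if S = -1 and Z = c + 1 + G if S = +1.\<close>
definition dsg_pmf :: "int \<Rightarrow> real \<Rightarrow> int pmf" where
  "dsg_pmf c p =
     bind_pmf (bernoulli_pmf (1/2)) (\<lambda>s.
     map_pmf (\<lambda>g. if s then c + 1 + int g else c - int g) (geometric_pmf p))"

definition clamp :: "int \<Rightarrow> int \<Rightarrow> int \<Rightarrow> int" where
  "clamp l u z = max l (min z u)"

definition censored_dsg_pmf :: "int \<Rightarrow> int \<Rightarrow> int \<Rightarrow> real \<Rightarrow> int pmf" where
  "censored_dsg_pmf l u c p = map_pmf (clamp l u) (dsg_pmf c p)"

end

theory Submission
  imports Defs
begin

lemma dom_map:
  assumes "\<And>z. pmf M z \<le> k * pmf N z"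
  shows "pmf (map_pmf f M) y \<le> k * pmf (map_pmf f N) y"
proof -
  have "pmf (map_pmf f M) y = infsetsum (pmf M) (f -` {y})"
    by (simp add: pmf_map measure_pmf_conv_infsetsum)
  also have "\<dots> \<le> infsetsum (\<lambda>z. k * pmf N z) (f -` {y})"
    by (rule infsetsum_mono) (use assms in auto)
  also have "\<dots> = k * infsetsum (pmf N) (f -` {y})"
    by (rule infsetsum_cmult_right) auto
  also have "\<dots> = k * pmf (map_pmf f N) y"
    by (simp add: pmf_map measure_pmf_conv_infsetsum)
  finally show ?thesis .
qed

lemma pmf_map_geo:
  assumes "inj g" "0 < p" "p < 1"
  shows "pmf (map_pmf g (geometric_pmf p)) z = (if z \<in> range g then (1-p)^(inv g z) * p else 0)"
proof (cases "z \<in> range g")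
  case True
  then obtain n where "z = g n" by auto
  then show ?thesis using assms by (simp add: pmf_map_inj')
next
  case False
  then have "g -` {z} = {}" by auto
  then show ?thesis using False by (simp add: pmf_map)
qed

lemma pmf_dsg:
  assumes "0 < p" "p < 1"
  shows "pmf (dsg_pmf c p) z = (if z \<le> c then p/2 * (1-p)^nat(c-z) else p/2 * (1-p)^nat(z-c-1))"
proof -
  have i1: "inj (\<lambda>g::nat. c + 1 + int g)" by (auto simp: inj_def)
  have i2: "inj (\<lambda>g::nat. c - int g)" by (auto simp: inj_def)
  have "pmf (dsg_pmf c p) z = (pmf (map_pmf (\<lambda>g::nat. c + 1 + int g) (geometric_pmf p)) z
      + pmf (map_pmf (\<lambda>g::nat. c - int g) (geometric_pmf p)) z) / 2"
    unfolding dsg_pmf_def pmf_bind by simp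
  show ?thesis
  proof (cases "z \<le> c")
    case True
    have a: "z \<notin> range (\<lambda>g::nat. c + 1 + int g)" using True by auto
    have b: "z = (\<lambda>g::nat. c - int g) (nat (c - z))" using True by simp
    show ?thesis
      unfolding dsg_pmf_def pmf_bind using True
      apply (simp add: pmf_map_geo[OF i1 assms] a del: pmf_geometric)
      apply (subst b, subst pmf_map_inj'[OF i2])
      using assms by simp
  next
    case False
    have a: "z \<notin> range (\<lambda>g::nat. c - int g)" using False by auto
    have b: "z = (\<lambda>g::nat. c + 1 + int g) (nat (z - c - 1))" using False by simp
    show ?thesis
      unfolding dsg_pmf_def pmf_bind using False
      apply (simp add: pmf_map_geo[OF i2 assms] a del: pmf_geometric)
      apply (subst b, subst pmf_map_inj'[OF i1])
      using assms by simp
  qed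
qed

lemma k1: "\<And>q a b::real. 0<q \<Longrightarrow> q<1 \<Longrightarrow> 0 \<le> a \<Longrightarrow> a \<le> b \<Longrightarrow> a \<le> 1/q * b"
proof -
  fix q a b :: real assume h: "0<q" "q<1" "0 \<le> a" "a \<le> b"
  have "b * q \<le> b" using h by (simp add: mult_left_le)
  hence "b \<le> b / q" using h by (simp add: le_divide_eq)
  thus "a \<le> 1/q * b" using h by simp
qed
lemma k2: "\<And>q a::real. 0<q \<Longrightarrow> q<1 \<Longrightarrow> 0 \<le> a \<Longrightarrow> q * a \<le> 1/q * a"
proof -
  fix q a :: real assume h: "0<q" "q<1" "0 \<le> a"
  have "q*a \<le> a" using h by (simp add: mult_left_le_one_le)
  thus "q * a \<le> 1/q * a" using k1[OF h(1,2) _ order.refl, of a] h by simp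
qed

lemma pointwise:
  assumes "0 < p" "p < 1"
  shows "pmf (dsg_pmf c p) z \<le> (1/(1-p)) * pmf (dsg_pmf (c+1) p) z \<and>
         pmf (dsg_pmf (c+1) p) z \<le> (1/(1-p)) * pmf (dsg_pmf c p) z"
proof -
  define q where "q = 1 - p"
  have q: "0 < q" "q < 1" using assms by (auto simp: q_def)
  have key: "\<And>a b::real. 0 \<le> a \<Longrightarrow> a \<le> b \<Longrightarrow> a \<le> 1/q * b" using k1 q by blast
  have key2: "\<And>a::real. 0 \<le> a \<Longrightarrow> a \<le> 1/q * (q * a)" using q by simp
  have key3: "\<And>a::real. 0 \<le> a \<Longrightarrow> q * a \<le> 1/q * a" using k2 q by blast
  show ?thesis
  proof (cases "z \<le> c")
    case True
    have e: "nat (c + 1 - z) = Suc (nat (c - z))" using True by simp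
    define A where "A = p/2 * q ^ nat (c - z)"
    have A: "0 \<le> A" using assms q by (simp add: A_def)
    have "pmf (dsg_pmf c p) z = A" using True by (simp add: pmf_dsg[OF assms] A_def q_def)
    moreover have "pmf (dsg_pmf (c+1) p) z = q * A" using True
      by (simp add: pmf_dsg[OF assms] A_def q_def[symmetric] e)
    ultimately show ?thesis using key2[OF A] key3[OF A] by (simp add: q_def)
  next
    case False
    show ?thesis
    proof (cases "z = c + 1")
      case True
      define A where "A = p/2"
      have A: "0 \<le> A" using assms q by (simp add: A_def)
      have "pmf (dsg_pmf c p) z = A" "pmf (dsg_pmf (c+1) p) z = A" using True
        by (simp_all add: pmf_dsg[OF assms] A_def)
      then show ?thesis using key[OF A order.refl] by (simp add: q_def)
    next
      case False2: False
      have e: "nat (z - c - 1) = Suc (nat (z - (c+1) - 1))" using False False2 by simp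
      define A where "A = p/2 * q ^ nat (z - (c+1) - 1)"
      have A: "0 \<le> A" using assms q by (simp add: A_def)
      have "pmf (dsg_pmf (c+1) p) z = A" using False False2 by (simp add: pmf_dsg[OF assms] A_def q_def)
      moreover have "pmf (dsg_pmf c p) z = q * A" using False False2
        by (simp add: pmf_dsg[OF assms] A_def q_def[symmetric] e del: diff_diff_eq)
      ultimately show ?thesis using key2[OF A] key3[OF A] by (simp add: q_def)
    qed
  qed
qed

lemma ratio:
  fixes a b k :: real
  assumes "0 \<le> a" "0 \<le> b" "0 < k" "a \<le> k * b"
  shows "a / b \<le> k"
  using assms by (cases "b = 0") (auto simp: divide_le_eq mult.commute)

theorem mainTheorem14:
  fixes l \<mu> u :: int and p :: real
  assumes "l < \<mu>" and "\<mu> < u"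
    and "0 < p" and "p < 1" and "dyadic p"
  shows "\<forall>y\<in>{l..u}.
           pmf (censored_dsg_pmf l u \<mu> p) y / pmf (censored_dsg_pmf l u (\<mu> + 1) p) y \<le> 1 / (1 - p)
         \<and> pmf (censored_dsg_pmf l u (\<mu> + 1) p) y / pmf (censored_dsg_pmf l u \<mu> p) y \<le> 1 / (1 - p)"
proof (intro ballI conjI)
  fix y
  have k: "0 < 1 / (1 - p)" using assms by simp
  note pw = pointwise[OF assms(3,4)]
  show "pmf (censored_dsg_pmf l u \<mu> p) y / pmf (censored_dsg_pmf l u (\<mu> + 1) p) y \<le> 1 / (1 - p)"
    unfolding censored_dsg_pmf_def
    by (rule ratio[OF pmf_nonneg pmf_nonneg k dom_map]) (use pw in blast)
  show "pmf (censored_dsg_pmf l u (\<mu> + 1) p) y / pmf (censored_dsg_pmf l u \<mu> p) y \<le> 1 / (1 - p)"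
    unfolding censored_dsg_pmf_def
    by (rule ratio[OF pmf_nonneg pmf_nonneg k dom_map]) (use pw in blast)
qed

end
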